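(* Let $q$ be an odd prime power and $\lambda,\mu$ positive integers with $\mu\le\lambda$. (a) If $q\equiv3\pmod4$ and $\lambda$ is odd, then both $\frac{(q^{\mu}+1)(q^{\lambda-\mu}+1)}{2(q^{\lambda}+1)}{\lambda\brack\mu}_{q^2}$ and $\frac{(q^{\mu}-1)(q^{\lambda-\mu}-1)}{2(q^{\lambda}+1)}{\lambda\brack\mu}_{q^2}$ are integers. (b) If either $q\equiv3\pmod4$ and $\lambda$ is even, or $q\equiv1\pmod4$, then both $\frac{(q^{\mu}+1)(q^{\lambda-\mu}-1)}{2(q^{\lambda}-1)}{\lambda\brack\mu}_{q^2}$ and $\frac{(q^{\mu}-1)(q^{\lambda-\mu}+1)}{2(q^{\lambda}-1)}{\lambda\brack\mu}_{q^2}$ are integers.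
   Context: Gaussian binomial coefficient: ${a\brack b}_Q=\prod_{i=0}^{b-1}\frac{Q^a-Q^i}{Q^b-Q^i}$ for integers $1\le b\le a$. *)

theory Defs
  imports Complex_Main "HOL-Computational_Algebra.Primes"
begin

definition gauss_binom :: "rat \<Rightarrow> nat \<Rightarrow> nat \<Rightarrow> rat" where
  "gauss_binom Q a b = (\<Prod>i<b. (Q ^ a - Q ^ i) / (Q ^ b - Q ^ i))"

definition prime_power :: "nat \<Rightarrow> bool" where
  "prime_power q \<longleftrightarrow> (\<exists>p k. prime p \<and> k \<ge> 1 \<and> q = p ^ k)"

end

theory Submission
  imports Defs
begin

definition qf :: "rat \<Rightarrow> nat \<Rightarrow> rat" where "qf Q n = (\<Prod>i<n. Q^(Suc i) - 1)"

lemma qf_0[simp]: "qf Q 0 = 1" by (simp add: qf_def)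
lemma qf_Suc: "qf Q (Suc n) = qf Q n * (Q^Suc n - 1)" by (simp add: qf_def)
lemma qf_nz: "Q > 1 \<Longrightarrow> qf Q n \<noteq> 0"
proof (induction n)
  case (Suc n)
  have "Q^Suc n > 1" using Suc.prems by (rule one_less_power) simp
  then show ?case using Suc by (simp add: qf_Suc)
qed simp

lemma gb_0[simp]: "gauss_binom Q n 0 = 1" by (simp add: gauss_binom_def)

lemma gb_gt: "n < k \<Longrightarrow> gauss_binom Q n k = 0"
  unfolding gauss_binom_def by (intro prod_zero) (auto intro!: bexI[of _ n])

lemma gb_Suc: "Q \<noteq> 0 \<Longrightarrow> gauss_binom Q (Suc n) (Suc k) = (Q^Suc n - 1)/(Q^Suc k - 1) * gauss_binom Q n k"
proof -
  assume Q: "Q \<noteq> 0"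
  have "(Q ^ Suc n - Q ^ Suc i) / (Q ^ Suc k - Q ^ Suc i) = (Q^n - Q^i)/(Q^k - Q^i)" for i
  proof -
    have "(Q ^ Suc n - Q ^ Suc i) / (Q ^ Suc k - Q ^ Suc i) = (Q*(Q^n - Q^i))/(Q*(Q^k - Q^i))"
      by (simp add: algebra_simps)
    also have "\<dots> = (Q^n - Q^i)/(Q^k - Q^i)" using Q by simp
    finally show ?thesis .
  qed
  then show ?thesis unfolding gauss_binom_def prod.lessThan_Suc_shift by simp
qed

lemma gb_qf: "Q > 1 \<Longrightarrow> k \<le> n \<Longrightarrow> gauss_binom Q n k = qf Q n / (qf Q k * qf Q (n-k))"
proof (induction k arbitrary: n)
  case 0
  then show ?case using qf_nz[of Q n] by simp
next
  case (Suc k)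
  then obtain n' where n: "n = Suc n'" and kn: "k \<le> n'" by (cases n) auto
  have Q: "Q \<noteq> 0" using Suc.prems by simp
  have k1: "Q^Suc k - 1 \<noteq> 0" using one_less_power[of Q "Suc k"] Suc.prems by simp
  have "gauss_binom Q n (Suc k) = (Q^Suc n' - 1)/(Q^Suc k - 1) * (qf Q n' / (qf Q k * qf Q (n'-k)))"
    using gb_Suc[OF Q] Suc.IH[OF Suc.prems(1) kn] n by simp
  also have "\<dots> = qf Q n / (qf Q (Suc k) * qf Q (n - Suc k))"
    using n qf_nz[OF Suc.prems(1)] k1 by (simp add: qf_Suc field_simps)
  finally show ?case .
qed

lemma abs1: fixes a b c u v :: rat assumes "b\<noteq>0" "c\<noteq>0" "u\<noteq>0" "v\<noteq>0"
  shows "u * (a/(b*u*c)) = v * (a/(b*(c*v)))"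
  using assms by (simp add: field_simps)

lemma abs2: fixes a b c U V :: rat assumes "b\<noteq>0" "c\<noteq>0" "U-1\<noteq>0" "V-1\<noteq>0"
  shows "a*(U*V-1)/(b*(U-1)*(c*(V-1))) = a/(b*(c*(V-1))) + U*(a/(b*(U-1)*c))"
  using assms by (simp add: divide_simps) (simp add: algebra_simps)

lemma gb_R2: "Q > 1 \<Longrightarrow> (Q^Suc k - 1) * gauss_binom Q n (Suc k) = (Q^(n-k) - 1) * gauss_binom Q n k"
proof (cases "k < n")
  case True
  assume Q1: "Q > 1"
  obtain d where n: "n = Suc k + d" using True using less_imp_Suc_add by blast
  have nk: "n - k = Suc d" "n - Suc k = d" using n by auto
  have k1: "Q^Suc k - 1 \<noteq> 0" using one_less_power[of Q "Suc k"] Q1 by simp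
  have d1: "Q^Suc d - 1 \<noteq> 0" using one_less_power[of Q "Suc d"] Q1 by simp
  have e1: "gauss_binom Q n (Suc k) = qf Q n / (qf Q k * (Q^Suc k - 1) * qf Q d)"
    using gb_qf[OF Q1, of "Suc k" n] True by (simp add: nk qf_Suc)
  have e2: "gauss_binom Q n k = qf Q n / (qf Q k * (qf Q d * (Q^Suc d - 1)))"
    using gb_qf[OF Q1, of k n] True by (simp add: nk qf_Suc)
  show ?thesis unfolding e1 e2 nk(1)
    by (rule abs1) (use k1 d1 qf_nz[OF Q1] in auto)
next
  case False
  then show ?thesis by (simp add: gb_gt)
qed

lemma gb_pascal: "Q > 1 \<Longrightarrow> gauss_binom Q (Suc n) (Suc k) = gauss_binom Q n k + Q^Suc k * gauss_binom Q n (Suc k)"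
proof -
  assume Q1: "Q > 1"
  consider "n < k" | "k = n" | "k < n" by linarith
  then show ?thesis
  proof cases
    case 1 then show ?thesis by (simp add: gb_gt)
  next
    case 2 then show ?thesis using Q1 by (simp add: gb_gt gb_qf qf_nz)
  next
    case 3
    obtain d where n: "n = Suc k + d" using 3 less_imp_Suc_add by blast
    have nk: "n - k = Suc d" "n - Suc k = d" "Suc n - Suc k = Suc d" using n by auto
    have k1: "Q^Suc k - 1 \<noteq> 0" using one_less_power[of Q "Suc k"] Q1 by simp
    have d1: "Q^Suc d - 1 \<noteq> 0" using one_less_power[of Q "Suc d"] Q1 by simp
    have e: "Q^Suc n = Q^Suc k * Q^Suc d" using n by (simp add: power_add[symmetric])
    have e0: "gauss_binom Q (Suc n) (Suc k) = qf Q n * (Q^Suc k * Q^Suc d - 1) / (qf Q k * (Q^Suc k - 1) * (qf Q d * (Q^Suc d - 1)))"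
    proof -
      have "gauss_binom Q (Suc n) (Suc k) = qf Q (Suc n) / (qf Q (Suc k) * qf Q (Suc d))"
        using gb_qf[OF Q1, of "Suc k" "Suc n"] 3 nk(3) by simp
      also have "\<dots> = qf Q n * (Q^Suc k * Q^Suc d - 1) / (qf Q k * (Q^Suc k - 1) * (qf Q d * (Q^Suc d - 1)))"
        by (simp only: qf_Suc e)
      finally show ?thesis .
    qed
    have e1: "gauss_binom Q n (Suc k) = qf Q n / (qf Q k * (Q^Suc k - 1) * qf Q d)"
      using gb_qf[OF Q1, of "Suc k" n] 3 by (simp add: nk qf_Suc)
    have e2: "gauss_binom Q n k = qf Q n / (qf Q k * (qf Q d * (Q^Suc d - 1)))"
      using gb_qf[OF Q1, of k n] 3 by (simp add: nk qf_Suc)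
    show ?thesis unfolding e0 e1 e2
      by (rule abs2) (use k1 d1 qf_nz[OF Q1] in auto)
  qed
qed

lemma gb_int: "Q \<in> \<int> \<Longrightarrow> Q > 1 \<Longrightarrow> gauss_binom Q n k \<in> \<int>"
proof (induction n arbitrary: k)
  case 0
  then show ?case by (cases k) (auto simp: gb_gt)
next
  case (Suc n)
  then show ?case by (cases k) (auto simp: gb_pascal)
qed

lemma div_lem: fixes a G d R :: rat assumes "d \<noteq> 0" "a*G = d*(2*R)" shows "a/(2*d)*G = R"
  using assms by (simp add: field_simps)

lemma keys: fixes A B y z :: rat
  assumes R: "(y^2-1)*B = (z^2-1)*A"
  shows "(y+1)*(z+1)*(A + y^2*B) = (y*z+1)*(2*(A*((1+z)/2) + B*(y*((y+1)/2))))"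
    and "(y-1)*(z-1)*(A + y^2*B) = (y*z+1)*(2*(- A*((z-1)/2) + B*(y*((y-1)/2))))"
    and "(y+1)*(z-1)*(A + y^2*B) = (y*z-1)*(2*(- A*((z-1)/2) + B*(y*((y+1)/2))))"
    and "(y-1)*(z+1)*(A + y^2*B) = (y*z-1)*(2*(A*((1+z)/2) + B*(y*((y-1)/2))))"
proof -
  have e1: "(y+1)*(z+1)*(A + y^2*B) - (y*z+1)*(2*(A*((1+z)/2) + B*(y*((y+1)/2)))) = y*((y^2-1)*B - (z^2-1)*A)"
    by (simp add: field_simps power2_eq_square)
  have e2: "(y-1)*(z-1)*(A + y^2*B) - (y*z+1)*(2*(- A*((z-1)/2) + B*(y*((y-1)/2)))) = - y*((y^2-1)*B - (z^2-1)*A)"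
    by (simp add: field_simps power2_eq_square)
  have e3: "(y+1)*(z-1)*(A + y^2*B) - (y*z-1)*(2*(- A*((z-1)/2) + B*(y*((y+1)/2)))) = - y*((y^2-1)*B - (z^2-1)*A)"
    by (simp add: field_simps power2_eq_square)
  have e4: "(y-1)*(z+1)*(A + y^2*B) - (y*z-1)*(2*(A*((1+z)/2) + B*(y*((y-1)/2)))) = y*((y^2-1)*B - (z^2-1)*A)"
    by (simp add: field_simps power2_eq_square)
  show "(y+1)*(z+1)*(A + y^2*B) = (y*z+1)*(2*(A*((1+z)/2) + B*(y*((y+1)/2))))"
    using e1 R by simp
  show "(y-1)*(z-1)*(A + y^2*B) = (y*z+1)*(2*(- A*((z-1)/2) + B*(y*((y-1)/2))))"
    using e2 R by simp
  show "(y+1)*(z-1)*(A + y^2*B) = (y*z-1)*(2*(- A*((z-1)/2) + B*(y*((y+1)/2))))"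
    using e3 R by simp
  show "(y-1)*(z+1)*(A + y^2*B) = (y*z-1)*(2*(A*((1+z)/2) + B*(y*((y-1)/2))))"
    using e4 R by simp
qed

lemma half_int: "odd (N::nat) \<Longrightarrow> (of_nat N + 1)/2 \<in> (\<int>::rat set) \<and> (of_nat N - 1)/2 \<in> (\<int>::rat set)"
proof -
  assume "odd N"
  then obtain t where t: "N = 2*t+1" by (metis oddE)
  have "(of_nat N + 1)/(2::rat) = of_nat (t+1)" "(of_nat N - 1)/(2::rat) = of_nat t" using t by simp_all
  then show ?thesis by (metis Ints_of_nat)
qed

theorem corollary3p1:
  fixes q l m :: nat
  assumes "prime_power q" and "odd q" and "1 \<le> m" and "m \<le> l"
  shows "(q mod 4 = 3 \<and> odd l \<longrightarrow>
           ((of_nat q ^ m + 1) * (of_nat q ^ (l - m) + 1) / (2 * (of_nat q ^ l + 1))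
              * gauss_binom (of_nat q ^ 2) l m \<in> (\<int> :: rat set)) \<and>
           ((of_nat q ^ m - 1) * (of_nat q ^ (l - m) - 1) / (2 * (of_nat q ^ l + 1))
              * gauss_binom (of_nat q ^ 2) l m \<in> (\<int> :: rat set)))
       \<and> ((q mod 4 = 3 \<and> even l) \<or> q mod 4 = 1 \<longrightarrow>
           ((of_nat q ^ m + 1) * (of_nat q ^ (l - m) - 1) / (2 * (of_nat q ^ l - 1))
              * gauss_binom (of_nat q ^ 2) l m \<in> (\<int> :: rat set)) \<and>
           ((of_nat q ^ m - 1) * (of_nat q ^ (l - m) + 1) / (2 * (of_nat q ^ l - 1))
              * gauss_binom (of_nat q ^ 2) l m \<in> (\<int> :: rat set)))"
proof -
  obtain p k where pk: "prime p" "k \<ge> 1" "q = p^k" using assms(1) unfolding prime_power_def by blast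
  have p2: "p \<ge> 2" using pk(1) prime_ge_2_nat by blast
  have "p^1 \<le> p^k" by (rule power_increasing) (use pk p2 in auto)
  hence "q \<ge> 2" using pk p2 by simp
  define x :: rat where "x = of_nat q"
  have x1: "x > 1" using \<open>q \<ge> 2\<close> unfolding x_def by simp
  define y where "y = x^m"
  define z where "z = x^(l-m)"
  obtain n kk where l: "l = Suc n" and m: "m = Suc kk"
    using assms(3,4) by (intro that[of "l-1" "m-1"]) auto
  have y1: "y > 1" unfolding y_def using one_less_power[OF x1, of m] assms(3) by simp
  have z1: "z \<ge> 1" unfolding z_def using x1 by simp
  have yz: "x^l = y*z" unfolding y_def z_def using assms(4) by (simp add: power_add[symmetric])
  have "y \<le> y*z" using mult_left_mono[of 1 z y] y1 z1 by simp
  hence yz1: "y*z > 1" using y1 by linarith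
  have Q1: "x^2 > 1" using one_less_power[OF x1, of 2] by simp
  have Qint: "x^2 \<in> \<int>" unfolding x_def by simp
  define A where "A = gauss_binom (x^2) n kk"
  define B where "B = gauss_binom (x^2) n m"
  have Aint: "A \<in> \<int>" unfolding A_def using gb_int[OF Qint Q1] .
  have Bint: "B \<in> \<int>" unfolding B_def using gb_int[OF Qint Q1] .
  have Qm: "(x^2)^m = y^2" unfolding y_def by (simp add: power_mult[symmetric] mult.commute)
  have lm: "n - kk = l - m" using l m by simp
  have Qlm: "(x^2)^(n-kk) = z^2" unfolding z_def lm by (simp add: power_mult[symmetric] mult.commute)
  have R2: "(y^2 - 1) * B = (z^2 - 1) * A"
    using gb_R2[OF Q1, of kk n] unfolding A_def B_def m Qm[unfolded m] Qlm .
  have G: "gauss_binom (x^2) l m = A + y^2 * B"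
    using gb_pascal[OF Q1, of n kk] unfolding A_def l m Qm[unfolded m] B_def[unfolded m] .
  have oy: "odd (q^m)" "odd (q^(l-m))" using assms(2) by simp_all
  have hy: "(y+1)/2 \<in> \<int>" "(y-1)/2 \<in> \<int>" using half_int[OF oy(1)] unfolding y_def x_def by simp_all
  have hz: "(1+z)/2 \<in> \<int>" "(z-1)/2 \<in> \<int>" using half_int[OF oy(2)] unfolding z_def x_def by (simp_all add: add.commute)
  have yi: "y \<in> \<int>" unfolding y_def x_def by simp
  have I1: "A*((1+z)/2) + B*(y*((y+1)/2)) \<in> \<int>" "- A*((z-1)/2) + B*(y*((y-1)/2)) \<in> \<int>"
           "- A*((z-1)/2) + B*(y*((y+1)/2)) \<in> \<int>" "A*((1+z)/2) + B*(y*((y-1)/2)) \<in> \<int>"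
    by (rule Ints_add Ints_mult Ints_minus Aint Bint hy hz yi)+
  have d1: "y*z+1 \<noteq> 0" "y*z-1 \<noteq> 0" using yz1 by auto
  note K = keys[OF R2]
  have F: "(y+1)*(z+1)/(2*(y*z+1))*(A + y^2*B) \<in> \<int>"
          "(y-1)*(z-1)/(2*(y*z+1))*(A + y^2*B) \<in> \<int>"
          "(y+1)*(z-1)/(2*(y*z-1))*(A + y^2*B) \<in> \<int>"
          "(y-1)*(z+1)/(2*(y*z-1))*(A + y^2*B) \<in> \<int>"
    using div_lem[OF d1(1) K(1)] div_lem[OF d1(1) K(2)] div_lem[OF d1(2) K(3)] div_lem[OF d1(2) K(4)] I1
    by simp_all
  show ?thesis
    unfolding x_def[symmetric] y_def[symmetric] z_def[symmetric] yz G
    using F by simp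
qed

end
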